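(* Let $\mathbb{G}$ be an $E$-group such that $\mathbb{G}$ is compatible with the Cayley graph $\mathrm{Cay}(\mathbb{G}[\alpha])$ for every $\alpha\subsetneq E$. Then $\mathbb{G}$ is $3$-acyclic.
   Context: Let $E$ be a finite set. An $E$-group is a group $\mathbb{G}$ together with an inclusion $E\subseteq\mathbb{G}$ such that $E$ generates $\mathbb{G}$ and every $e\in E$ satisfies $e\neq1$, $e^2=1$. For $w=e_1\cdots e_n\in E^*$, $[w]_{\mathbb{G}}=e_1\cdots e_n$. For $\alpha\subseteq E$, $\mathbb{G}[\alpha]$ is the subgroup generated by $\alpha$. An $E$-graph is $\mathbb{H}=(V,(R_e)_{e\in E})$ with each $R_e\subseteq V\times V$ symmetric and every vertex having at most one $R_e$-neighbour. For $e\in E$, $\pi_e$ is the permutation of $V$ swapping each vertex with its $R_e$-neighbour if it has one and fixing it otherwise; for $w=e_1\cdots e_n$, $\pi_w=\pi_{e_n}\circ\cdots\circ\pi_{e_1}$. $\mathbb{G}$ is compatible with $\mathbb{H}$ if $[w]_{\mathbb{G}}=1$ implies $\pi_w=\mathrm{id}_V$ for all $w\in E^*$. $\mathrm{Cay}(\mathbb{G}[\alpha])$ is the $E$-graph on vertex set $\mathbb{G}[\alpha]$ with $R_e=\{(g,ge):g\in\mathbb{G}[\alpha]\}$ for $e\in\alpha$ and $R_e=\emptyset$ for $e\notin\alpha$. A coset cycle of length $n\ge2$ in $\mathbb{G}$ is a cyclically indexed family $(g_i,\alpha_i)_{i\in\mathbb{Z}_n}$ with $g_i\in\mathbb{G}$,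 $\alpha_i\subseteq E$, such that for all $i$: $g_{i+1}\in g_i\mathbb{G}[\alpha_i]$ and $g_i\mathbb{G}[\alpha_i\cap\alpha_{i-1}]\cap g_{i+1}\mathbb{G}[\alpha_i\cap\alpha_{i+1}]=\emptyset$. $\mathbb{G}$ is $N$-acyclic if it admits no coset cycle of length $n$ with $2\le n\le N$. *)

theory Defs
  imports "HOL-Algebra.Coset" "HOL-Algebra.Generated_Groups"
begin

definition E_group :: "('a, 'b) monoid_scheme \<Rightarrow> 'a set \<Rightarrow> bool" where
  "E_group G E \<longleftrightarrow> group G \<and> finite E \<and> E \<subseteq> carrier G \<and> generate G E = carrier G
     \<and> (\<forall>e\<in>E. e \<noteq> \<one>\<^bsub>G\<^esub> \<and> e \<otimes>\<^bsub>G\<^esub> e = \<one>\<^bsub>G\<^esub>)"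

definition word_eval :: "('a, 'b) monoid_scheme \<Rightarrow> 'a list \<Rightarrow> 'a" where
  "word_eval G w = foldr (\<lambda>e x. e \<otimes>\<^bsub>G\<^esub> x) w \<one>\<^bsub>G\<^esub>"

text \<open>E-graph given by its edge relations R e; pi_e swaps a vertex with its R_e-neighbour if any.\<close>
definition pi_e :: "('e \<Rightarrow> ('v \<times> 'v) set) \<Rightarrow> 'e \<Rightarrow> 'v \<Rightarrow> 'v" where
  "pi_e R e v = (if \<exists>u. (v, u) \<in> R e then (THE u. (v, u) \<in> R e) else v)"

definition pi_word :: "('e \<Rightarrow> ('v \<times> 'v) set) \<Rightarrow> 'e list \<Rightarrow> 'v \<Rightarrow> 'v" where
  "pi_word R w = fold (\<lambda>e f. pi_e R e \<circ> f) w id"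

definition compatible :: "('a, 'b) monoid_scheme \<Rightarrow> 'a set \<Rightarrow> 'v set \<Rightarrow> ('a \<Rightarrow> ('v \<times> 'v) set) \<Rightarrow> bool" where
  "compatible G E V R \<longleftrightarrow>
     (\<forall>w \<in> lists E. word_eval G w = \<one>\<^bsub>G\<^esub> \<longrightarrow> (\<forall>v\<in>V. pi_word R w v = v))"

definition cayley_R :: "('a, 'b) monoid_scheme \<Rightarrow> 'a set \<Rightarrow> 'a \<Rightarrow> ('a \<times> 'a) set" where
  "cayley_R G \<alpha> e = (if e \<in> \<alpha> then {(g, g \<otimes>\<^bsub>G\<^esub> e) | g. g \<in> generate G \<alpha>} else {})"

definition coset_cycle :: "('a, 'b) monoid_scheme \<Rightarrow> 'a set \<Rightarrow> nat \<Rightarrow> (nat \<Rightarrow> 'a) \<Rightarrow> (nat \<Rightarrow> 'a set) \<Rightarrow> bool" where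
  "coset_cycle G E n g \<alpha> \<longleftrightarrow> 2 \<le> n \<and>
     (\<forall>i<n. g i \<in> carrier G \<and> \<alpha> i \<subseteq> E
        \<and> g ((i + 1) mod n) \<in> g i <#\<^bsub>G\<^esub> generate G (\<alpha> i)
        \<and> (g i <#\<^bsub>G\<^esub> generate G (\<alpha> i \<inter> \<alpha> ((i + n - 1) mod n)))
          \<inter> (g ((i + 1) mod n) <#\<^bsub>G\<^esub> generate G (\<alpha> i \<inter> \<alpha> ((i + 1) mod n))) = {})"

definition N_acyclic :: "('a, 'b) monoid_scheme \<Rightarrow> 'a set \<Rightarrow> nat \<Rightarrow> bool" where
  "N_acyclic G E N \<longleftrightarrow> \<not> (\<exists>n g \<alpha>. 2 \<le> n \<and> n \<le> N \<and> coset_cycle G E n g \<alpha>)"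

end

theory Submission
  imports Defs
begin

lemma word_eval_append:
  assumes "group G" "set u \<subseteq> carrier G" "set v \<subseteq> carrier G"
  shows "word_eval G (u @ v) = word_eval G u \<otimes>\<^bsub>G\<^esub> word_eval G v"
proof -
  interpret group G by fact
  have c: "set w \<subseteq> carrier G \<Longrightarrow> word_eval G w \<in> carrier G" for w
    by (induction w) (auto simp: word_eval_def)
  show ?thesis using assms(2,3)
    by (induction u) (auto simp: word_eval_def c[unfolded word_eval_def] m_assoc)
qed

lemma word_eval_carrier:
  assumes "group G" "set w \<subseteq> carrier G"
  shows "word_eval G w \<in> carrier G"
proof -
  interpret group G by fact
  show ?thesis using assms(2) by (induction w) (auto simp: word_eval_def)
qed

lemma gen_word:
  assumes "E_group G E" "S \<subseteq> E" "h \<in> generate G S"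
  shows "\<exists>w \<in> lists S. word_eval G w = h"
  using assms(3)
proof (induction rule: generate.induct)
  case one
  then show ?case by (intro bexI[of _ "[]"]) (auto simp: word_eval_def)
next
  case (incl h)
  then show ?case using assms unfolding E_group_def
    by (intro bexI[of _ "[h]"]) (auto simp: word_eval_def monoid.r_one[OF group.is_monoid])
next
  case (inv h)
  from assms have g: "group G" and hE: "h \<in> carrier G" "h \<otimes>\<^bsub>G\<^esub> h = \<one>\<^bsub>G\<^esub>"
    using inv unfolding E_group_def by auto
  have "inv\<^bsub>G\<^esub> h = h" using group.inv_equality[OF g hE(2) hE(1) hE(1)] .
  then show ?case using inv hE g
    by (intro bexI[of _ "[h]"]) (auto simp: word_eval_def monoid.r_one[OF group.is_monoid])
next
  case (eng h1 h2)
  then obtain w1 w2 where w: "w1 \<in> lists S" "w2 \<in> lists S" "word_eval G w1 = h1" "word_eval G w2 = h2"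
    by blast
  have g: "group G" and "S \<subseteq> carrier G" using assms unfolding E_group_def by auto
  then have "set w1 \<subseteq> carrier G" "set w2 \<subseteq> carrier G" using w by auto
  then show ?case using w word_eval_append[OF g] by (intro bexI[of _ "w1 @ w2"]) auto
qed

lemma word_gen:
  assumes "group G" "w \<in> lists S" "S \<subseteq> carrier G"
  shows "word_eval G w \<in> generate G S"
  using assms(2)
proof (induction w)
  case Nil
  then show ?case by (simp add: word_eval_def generate.one)
next
  case (Cons a w)
  then show ?case by (simp add: word_eval_def generate.eng generate.incl)
qed

lemma fold_comp0:
  "fold (\<lambda>e f. p e \<circ> f) w (h \<circ> g) = fold (\<lambda>e f. p e \<circ> f) w h \<circ> g"
proof (induction w arbitrary: h)
  case Nil
  then show ?case by simp
next
  case (Cons a w)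
  show ?case using Cons.IH[of "p a \<circ> h"] by (simp add: comp_assoc)
qed

lemma fold_comp:
  "fold (\<lambda>e f. p e \<circ> f) w g = fold (\<lambda>e f. p e \<circ> f) w id \<circ> g"
  using fold_comp0[of p w id g] by simp

lemma pi_word_cons: "pi_word R (e # w) v = pi_word R w (pi_e R e v)"
  unfolding pi_word_def by (simp add: fold_comp[of _ _ "pi_e R e"])

lemma pi_word_cayley:
  assumes "group G" "\<alpha> \<subseteq> carrier G" "set w \<subseteq> carrier G" "v \<in> generate G \<alpha>"
  shows "pi_word (cayley_R G \<alpha>) w v = v \<otimes>\<^bsub>G\<^esub> word_eval G (filter (\<lambda>x. x \<in> \<alpha>) w)"
  using assms(3,4)
proof (induction w arbitrary: v)
  case Nil
  interpret group G by fact
  have "v \<in> carrier G" using Nil generate_incl[OF assms(2)] by auto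
  then show ?case by (simp add: pi_word_def word_eval_def)
next
  case (Cons e w)
  interpret group G by fact
  have vc: "v \<in> carrier G" using Cons generate_incl[OF assms(2)] by auto
  show ?case
  proof (cases "e \<in> \<alpha>")
    case True
    have R: "cayley_R G \<alpha> e = {(g, g \<otimes>\<^bsub>G\<^esub> e) | g. g \<in> generate G \<alpha>}"
      using True by (simp add: cayley_R_def)
    have iff: "(v, u) \<in> cayley_R G \<alpha> e \<longleftrightarrow> u = v \<otimes>\<^bsub>G\<^esub> e" for u
      unfolding R using Cons(3) by blast
    have pe: "pi_e (cayley_R G \<alpha>) e v = v \<otimes>\<^bsub>G\<^esub> e"
      unfolding pi_e_def iff by simp
    have vg: "v \<otimes>\<^bsub>G\<^esub> e \<in> generate G \<alpha>" using True Cons(3) by (simp add: generate.eng generate.incl)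
    have "set (filter (\<lambda>x. x \<in> \<alpha>) w) \<subseteq> carrier G" using Cons by auto
    then show ?thesis using Cons True pe vg vc
      by (simp add: pi_word_cons word_eval_def m_assoc word_eval_carrier[OF assms(1), unfolded word_eval_def])
  next
    case False
    have pe: "pi_e (cayley_R G \<alpha>) e v = v"
      unfolding pi_e_def cayley_R_def using False by auto
    then show ?thesis using Cons False by (simp add: pi_word_cons)
  qed
qed

lemma proj_one:
  assumes "E_group G E" "\<forall>\<alpha>. \<alpha> \<subset> E \<longrightarrow> compatible G E (generate G \<alpha>) (cayley_R G \<alpha>)"
    "\<alpha> \<subset> E" "w \<in> lists E" "word_eval G w = \<one>\<^bsub>G\<^esub>"
  shows "word_eval G (filter (\<lambda>x. x \<in> \<alpha>) w) = \<one>\<^bsub>G\<^esub>"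
proof -
  have g: "group G" and EC: "E \<subseteq> carrier G" using assms(1) unfolding E_group_def by auto
  interpret group G by fact
  have "pi_word (cayley_R G \<alpha>) w \<one>\<^bsub>G\<^esub> = \<one>\<^bsub>G\<^esub>"
  proof -
    have "compatible G E (generate G \<alpha>) (cayley_R G \<alpha>)" using assms(2,3) by blast
    thus ?thesis using assms(4,5) generate.one[of G \<alpha>] unfolding compatible_def by blast
  qed
  moreover have "pi_word (cayley_R G \<alpha>) w \<one>\<^bsub>G\<^esub> = \<one>\<^bsub>G\<^esub> \<otimes>\<^bsub>G\<^esub> word_eval G (filter (\<lambda>x. x \<in> \<alpha>) w)"
  proof -
    have "\<alpha> \<subseteq> carrier G" "set w \<subseteq> carrier G" using assms(3,4) EC by auto
    thus ?thesis using pi_word_cayley[OF g] generate.one[of G \<alpha>] by blast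
  qed
  moreover have "word_eval G (filter (\<lambda>x. x \<in> \<alpha>) w) \<in> carrier G"
    using assms(4) EC by (intro word_eval_carrier[OF g]) auto
  ultimately show ?thesis by simp
qed

lemma core:
  assumes EG: "E_group G E" and comp: "\<forall>\<alpha>. \<alpha> \<subset> E \<longrightarrow> compatible G E (generate G \<alpha>) (cayley_R G \<alpha>)"
    and sub: "\<alpha> \<subseteq> E" "\<beta> \<subseteq> E" "\<gamma> \<subseteq> E"
    and car: "a \<in> carrier G" "b \<in> carrier G" "c \<in> carrier G"
    and ab: "b \<in> a <#\<^bsub>G\<^esub> generate G \<beta>"
    and bc: "c \<in> b <#\<^bsub>G\<^esub> generate G \<alpha>"
    and ca: "a \<in> c <#\<^bsub>G\<^esub> generate G \<gamma>"
  shows "(b <#\<^bsub>G\<^esub> generate G (\<alpha> \<inter> \<beta>)) \<inter> (c <#\<^bsub>G\<^esub> generate G (\<alpha> \<inter> \<gamma>)) \<noteq> {}"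
proof -
  have g: "group G" and EC: "E \<subseteq> carrier G" using EG unfolding E_group_def by auto
  interpret group G by fact
  have SG: "S \<subseteq> E \<Longrightarrow> subgroup (generate G S) G" for S using generate_is_subgroup EC by auto
  obtain k where k: "k \<in> generate G \<beta>" "b = a \<otimes>\<^bsub>G\<^esub> k" using ab unfolding l_coset_def by auto
  obtain h where h: "h \<in> generate G \<alpha>" "c = b \<otimes>\<^bsub>G\<^esub> h" using bc unfolding l_coset_def by auto
  obtain m where m: "m \<in> generate G \<gamma>" "a = c \<otimes>\<^bsub>G\<^esub> m" using ca unfolding l_coset_def by auto
  have kc: "k \<in> carrier G" using subgroup.mem_carrier[OF SG[OF sub(2)] k(1)] .
  have hc: "h \<in> carrier G" using subgroup.mem_carrier[OF SG[OF sub(1)] h(1)] .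
  have mc: "m \<in> carrier G" using subgroup.mem_carrier[OF SG[OF sub(3)] m(1)] .
  show ?thesis
  proof (cases "\<alpha> = E")
    case True
    have "\<beta> \<subseteq> \<alpha>" "\<gamma> \<subseteq> \<alpha>" using True sub by auto
    hence ab': "\<alpha> \<inter> \<beta> = \<beta>" "\<alpha> \<inter> \<gamma> = \<gamma>" by auto
    have "a = b \<otimes>\<^bsub>G\<^esub> inv\<^bsub>G\<^esub> k" using k car kc by (simp add: m_assoc)
    moreover have "inv\<^bsub>G\<^esub> k \<in> generate G \<beta>" using subgroup.m_inv_closed[OF SG[OF sub(2)] k(1)] .
    ultimately have "a \<in> b <#\<^bsub>G\<^esub> generate G \<beta>" unfolding l_coset_def by auto
    moreover have "a \<in> c <#\<^bsub>G\<^esub> generate G \<gamma>" using ca .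
    ultimately show ?thesis using ab' by auto
  next
    case False
    hence lt: "\<alpha> \<subset> E" using sub by auto
    obtain u where u: "u \<in> lists \<alpha>" "word_eval G u = h" using gen_word[OF EG sub(1) h(1)] by auto
    obtain v where v: "v \<in> lists \<gamma>" "word_eval G v = m" using gen_word[OF EG sub(3) m(1)] by auto
    obtain t where t: "t \<in> lists \<beta>" "word_eval G t = k" using gen_word[OF EG sub(2) k(1)] by auto
    have sc: "set u \<subseteq> carrier G" "set v \<subseteq> carrier G" "set t \<subseteq> carrier G"
      using u v t sub EC by auto
    have hmk: "h \<otimes>\<^bsub>G\<^esub> m \<otimes>\<^bsub>G\<^esub> k = \<one>\<^bsub>G\<^esub>"
    proof -
      have e1: "b = (c \<otimes>\<^bsub>G\<^esub> m) \<otimes>\<^bsub>G\<^esub> k" using k(2) m(2) by metis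
      have e2: "b = ((b \<otimes>\<^bsub>G\<^esub> h) \<otimes>\<^bsub>G\<^esub> m) \<otimes>\<^bsub>G\<^esub> k" using e1 h(2) by metis
      have "b = b \<otimes>\<^bsub>G\<^esub> (h \<otimes>\<^bsub>G\<^esub> m \<otimes>\<^bsub>G\<^esub> k)"
        using car hc mc kc by (subst e2) (simp add: m_assoc)
      thus ?thesis using l_cancel_one'[of b "h \<otimes>\<^bsub>G\<^esub> m \<otimes>\<^bsub>G\<^esub> k"] car hc mc kc by simp
    qed
    have "word_eval G (u @ v @ t) = \<one>\<^bsub>G\<^esub>"
      using hmk u v t sc word_eval_append[OF g] by (simp add: m_assoc hc mc kc)
    moreover have "u @ v @ t \<in> lists E" using u v t sub by auto
    ultimately have f1: "word_eval G (filter (\<lambda>x. x \<in> \<alpha>) (u @ v @ t)) = \<one>\<^bsub>G\<^esub>"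
      using proj_one[OF EG comp lt] by blast
    define v' where "v' = filter (\<lambda>x. x \<in> \<alpha>) v"
    define t' where "t' = filter (\<lambda>x. x \<in> \<alpha>) t"
    have fu: "filter (\<lambda>x. x \<in> \<alpha>) u = u" using u by (auto simp: filter_id_conv)
    have v'l: "v' \<in> lists (\<alpha> \<inter> \<gamma>)" "t' \<in> lists (\<alpha> \<inter> \<beta>)" using v t by (auto simp: v'_def t'_def)
    have sc': "set v' \<subseteq> carrier G" "set t' \<subseteq> carrier G" using sc by (auto simp: v'_def t'_def)
    define m' where "m' = word_eval G v'"
    define k' where "k' = word_eval G t'"
    have m'g: "m' \<in> generate G (\<alpha> \<inter> \<gamma>)" unfolding m'_def
      using word_gen[OF g v'l(1)] sub EC by auto
    have k'g: "k' \<in> generate G (\<alpha> \<inter> \<beta>)" unfolding k'_def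
      using word_gen[OF g v'l(2)] sub EC by auto
    have m'c: "m' \<in> carrier G" and k'c: "k' \<in> carrier G"
      using sc' word_eval_carrier[OF g] by (auto simp: m'_def k'_def)
    have e0: "h \<otimes>\<^bsub>G\<^esub> (m' \<otimes>\<^bsub>G\<^esub> k') = \<one>\<^bsub>G\<^esub>"
      using f1 fu sc sc' word_eval_append[OF g] u
      by (simp add: m'_def k'_def v'_def[symmetric] t'_def[symmetric])
    have e: "h \<otimes>\<^bsub>G\<^esub> m' \<otimes>\<^bsub>G\<^esub> k' = \<one>\<^bsub>G\<^esub>"
      using e0 hc m'c k'c by (simp add: m_assoc)
    have ik: "inv\<^bsub>G\<^esub> k' \<in> generate G (\<alpha> \<inter> \<beta>)"
      using k'g subgroup.m_inv_closed[OF SG[of "\<alpha> \<inter> \<beta>"]] sub by blast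
    have eq: "c \<otimes>\<^bsub>G\<^esub> m' = b \<otimes>\<^bsub>G\<^esub> inv\<^bsub>G\<^esub> k'"
    proof -
      have "h \<otimes>\<^bsub>G\<^esub> m' = inv\<^bsub>G\<^esub> k'" using inv_equality[of "h \<otimes>\<^bsub>G\<^esub> m'" k'] e hc m'c k'c by simp
      thus ?thesis using h car hc m'c by (simp add: m_assoc)
    qed
    have "c \<otimes>\<^bsub>G\<^esub> m' \<in> c <#\<^bsub>G\<^esub> generate G (\<alpha> \<inter> \<gamma>)" using m'g unfolding l_coset_def by auto
    moreover have "c \<otimes>\<^bsub>G\<^esub> m' \<in> b <#\<^bsub>G\<^esub> generate G (\<alpha> \<inter> \<beta>)" using ik eq unfolding l_coset_def by auto
    ultimately show ?thesis by blast
  qed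
qed

theorem mainTheorem6:
  fixes G :: "('a, 'b) monoid_scheme" and E :: "'a set"
  assumes "E_group G E"
    and "\<forall>\<alpha>. \<alpha> \<subset> E \<longrightarrow> compatible G E (generate G \<alpha>) (cayley_R G \<alpha>)"
  shows "N_acyclic G E 3"
proof -
  have g: "group G" and EC: "E \<subseteq> carrier G" using assms(1) unfolding E_group_def by auto
  interpret group G by fact
  have onein: "x \<in> carrier G \<Longrightarrow> x \<in> x <#\<^bsub>G\<^esub> generate G S" for x S
    unfolding l_coset_def using generate.one by force
  show ?thesis unfolding N_acyclic_def
  proof (intro notI, elim exE conjE)
    fix n g \<alpha> assume n: "2 \<le> n" "n \<le> 3" and cc: "coset_cycle G E n g \<alpha>"
    have C: "\<forall>i<n. g i \<in> carrier G \<and> \<alpha> i \<subseteq> E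
        \<and> g ((i + 1) mod n) \<in> g i <#\<^bsub>G\<^esub> generate G (\<alpha> i)
        \<and> (g i <#\<^bsub>G\<^esub> generate G (\<alpha> i \<inter> \<alpha> ((i + n - 1) mod n)))
          \<inter> (g ((i + 1) mod n) <#\<^bsub>G\<^esub> generate G (\<alpha> i \<inter> \<alpha> ((i + 1) mod n))) = {}"
      using cc unfolding coset_cycle_def by blast
    show False
    proof (cases "n = 2")
      case True
      have c0: "g 0 \<in> carrier G \<and> \<alpha> 0 \<subseteq> E \<and> g 1 \<in> g 0 <#\<^bsub>G\<^esub> generate G (\<alpha> 0)
        \<and> (g 0 <#\<^bsub>G\<^esub> generate G (\<alpha> 0 \<inter> \<alpha> 1)) \<inter> (g 1 <#\<^bsub>G\<^esub> generate G (\<alpha> 0 \<inter> \<alpha> 1)) = {}"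
        using C[rule_format, of 0] True by simp
      have c1: "g 1 \<in> carrier G \<and> \<alpha> 1 \<subseteq> E \<and> g 0 \<in> g 1 <#\<^bsub>G\<^esub> generate G (\<alpha> 1)"
        using C[rule_format, of 1] True by simp
      show False using core[OF assms(1,2), of "\<alpha> 0" "\<alpha> 1" "\<alpha> 1" "g 1" "g 0" "g 1"] c0 c1 onein
        by (auto simp: Int_commute)
    next
      case False
      hence n3: "n = 3" using n by auto
      have c0: "g 0 \<in> carrier G \<and> \<alpha> 0 \<subseteq> E \<and> g 1 \<in> g 0 <#\<^bsub>G\<^esub> generate G (\<alpha> 0)
        \<and> (g 0 <#\<^bsub>G\<^esub> generate G (\<alpha> 0 \<inter> \<alpha> 2)) \<inter> (g 1 <#\<^bsub>G\<^esub> generate G (\<alpha> 0 \<inter> \<alpha> 1)) = {}"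
        using C[rule_format, of 0] n3 by simp
      have c1: "g 1 \<in> carrier G \<and> \<alpha> 1 \<subseteq> E \<and> g 2 \<in> g 1 <#\<^bsub>G\<^esub> generate G (\<alpha> 1)"
        using C[rule_format, of 1] n3 by (simp add: numeral_2_eq_2)
      have c2: "g 2 \<in> carrier G \<and> \<alpha> 2 \<subseteq> E \<and> g 0 \<in> g 2 <#\<^bsub>G\<^esub> generate G (\<alpha> 2)"
        using C[rule_format, of 2] n3 by (simp add: numeral_2_eq_2)
      show False using core[OF assms(1,2), of "\<alpha> 0" "\<alpha> 2" "\<alpha> 1" "g 2" "g 0" "g 1"] c0 c1 c2
        by auto
    qed
  qed
qed

end
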